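(* Let $J$ be either a closed interval in $\mathbb{R}$ or a circle, and let $n\geq 3$. Then the set of injective maps in $\mathrm{CBV}^n_{\mathbb{R}}(J)$ is dense in $\mathrm{CBV}^n_{\mathbb{R}}(J)$ with respect to the norm $\|\cdot\|_{\mathrm{bv}}$.
   Context: $\mathrm{CBV}^n_{\mathbb{R}}(J)$ denotes the Banach space of continuous maps $F:J\to\mathbb{R}^n$ of bounded variation, with norm $\|F\|_{\mathrm{bv}}=\sup_J|F|+\mathrm{var}\,F$, where $\mathrm{var}\,F$ is the total variation of $F$ over $J$. *)

theory Defs
  imports "HOL-Analysis.Analysis"
begin

definition variation_sums :: "real \<Rightarrow> real \<Rightarrow> (real \<Rightarrow> 'a::real_normed_vector) \<Rightarrow> real set" where
  "variation_sums a b F =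
     {(\<Sum>i<m. norm (F (t (Suc i)) - F (t i))) | t m.
        t 0 = a \<and> t m = b \<and> (\<forall>i<m. t i \<le> t (Suc i))}"

definition total_variation :: "real \<Rightarrow> real \<Rightarrow> (real \<Rightarrow> 'a::real_normed_vector) \<Rightarrow> real" where
  "total_variation a b F = Sup (variation_sums a b F)"

definition has_bounded_variation_on_interval ::
    "real \<Rightarrow> real \<Rightarrow> (real \<Rightarrow> 'a::real_normed_vector) \<Rightarrow> bool" where
  "has_bounded_variation_on_interval a b F \<longleftrightarrow> bdd_above (variation_sums a b F)"

definition CBV_interval :: "real \<Rightarrow> real \<Rightarrow> (real \<Rightarrow> 'a::real_normed_vector) \<Rightarrow> bool" where
  "CBV_interval a b F \<longleftrightarrow> continuous_on {a..b} F \<and> has_bounded_variation_on_interval a b F"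

definition bv_norm_interval :: "real \<Rightarrow> real \<Rightarrow> (real \<Rightarrow> 'a::real_normed_vector) \<Rightarrow> real" where
  "bv_norm_interval a b F = (SUP t\<in>{a..b}. norm (F t)) + total_variation a b F"

(* The circle J = S^1 = sphere 0 1 in the complex plane; variation along the circle
   is the variation of F composed with the standard parametrisation t \<mapsto> exp(2 pi i t), t\<in>[0,1]. *)
definition circle_param :: "real \<Rightarrow> complex" where
  "circle_param t = cis (2 * pi * t)"

definition CBV_circle :: "(complex \<Rightarrow> 'a::real_normed_vector) \<Rightarrow> bool" where
  "CBV_circle F \<longleftrightarrow> continuous_on (sphere 0 1) F \<and>
      has_bounded_variation_on_interval 0 1 (F \<circ> circle_param)"

definition bv_norm_circle :: "(complex \<Rightarrow> 'a::real_normed_vector) \<Rightarrow> real" where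
  "bv_norm_circle F = (SUP z\<in>sphere 0 1. norm (F z)) + total_variation 0 1 (F \<circ> circle_param)"

end

theory Submission imports Defs "HOL-Analysis.Analysis" begin

lemma vs_memI: "p 0 = a \<Longrightarrow> p m = b \<Longrightarrow> \<forall>i<m. p i \<le> p (Suc i) \<Longrightarrow>
   (\<Sum>i<m. norm (F (p (Suc i)) - F (p i))) \<in> variation_sums a b F"
  unfolding variation_sums_def by blast

lemma vs_nonempty: "a \<le> b \<Longrightarrow> variation_sums a b F \<noteq> {}"
  using vs_memI[of "\<lambda>i. if i=0 then a else b" a 1 b F] by auto

lemma vs_ext:
  assumes "s \<in> variation_sums a t F" "t \<le> t'"
  shows "s + norm (F t' - F t) \<in> variation_sums a t' F"
proof -
  obtain p m where s: "s = (\<Sum>i<m. norm (F (p (Suc i)) - F (p i)))" and p: "p 0 = a" "p m = t"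
    "\<forall>i<m. p i \<le> p (Suc i)"
    using assms(1) unfolding variation_sums_def by blast
  define q where "q i = (if i \<le> m then p i else t')" for i
  have "(\<Sum>i<Suc m. norm (F (q (Suc i)) - F (q i))) = s + norm (F t' - F t)"
    using p by (simp add: s q_def)
  moreover have "q 0 = a" "q (Suc m) = t'" "\<forall>i<Suc m. q i \<le> q (Suc i)"
    using p assms(2) by (auto simp: q_def less_Suc_eq)
  ultimately show ?thesis using vs_memI[of q a "Suc m" t' F] by simp
qed

lemma lip_vs:
  assumes "\<And>x y. norm (f x - f y) \<le> L * \<bar>x - y\<bar>" "s \<in> variation_sums a b f"
  shows "s \<le> L * (b - a)"
proof -
  obtain p m where s: "s = (\<Sum>i<m. norm (f (p (Suc i)) - f (p i)))" and p: "p 0 = a" "p m = b"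
    "\<forall>i<m. p i \<le> p (Suc i)"
    using assms(2) unfolding variation_sums_def by blast
  have "s \<le> (\<Sum>i<m. L * (p (Suc i) - p i))"
    unfolding s
  proof (rule sum_mono)
    fix i assume "i \<in> {..<m}"
    then have "p i \<le> p (Suc i)" using p by auto
    then show "norm (f (p (Suc i)) - f (p i)) \<le> L * (p (Suc i) - p i)"
      using assms(1)[of "p (Suc i)" "p i"] by simp
  qed
  also have "\<dots> = L * (b - a)"
    by (simp add: sum_distrib_left[symmetric] sum_lessThan_telescope p)
  finally show ?thesis .
qed

lemma lip_tv:
  assumes "\<And>x y. norm (f x - f y) \<le> L * \<bar>x - y\<bar>" "a \<le> b"
  shows "has_bounded_variation_on_interval a b f" "total_variation a b f \<le> L * (b - a)"
proof -
  show "has_bounded_variation_on_interval a b f"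
    unfolding has_bounded_variation_on_interval_def bdd_above_def
    using lip_vs[OF assms(1)] by blast
  show "total_variation a b f \<le> L * (b - a)"
    unfolding total_variation_def
    by (rule cSup_least[OF vs_nonempty[OF assms(2)]]) (rule lip_vs[OF assms(1)])
qed

lemma bv_sub:
  assumes "has_bounded_variation_on_interval a b F" "a \<le> t" "t \<le> b"
  shows "bdd_above (variation_sums a t F)"
proof -
  obtain B where B: "\<And>s. s \<in> variation_sums a b F \<Longrightarrow> s \<le> B"
    using assms(1) unfolding has_bounded_variation_on_interval_def bdd_above_def by blast
  show ?thesis unfolding bdd_above_def
  proof (intro exI ballI)
    fix s assume "s \<in> variation_sums a t F"
    from B[OF vs_ext[OF this assms(3)]] show "s \<le> B" by (smt (verit) norm_ge_zero)
  qed
qed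

lemma tv_super:
  assumes "has_bounded_variation_on_interval a b F" "a \<le> t" "t \<le> t'" "t' \<le> b"
  shows "total_variation a t F + norm (F t' - F t) \<le> total_variation a t' F"
proof -
  have bdd: "bdd_above (variation_sums a t' F)" using bv_sub assms by force
  have "total_variation a t F \<le> total_variation a t' F - norm (F t' - F t)"
    unfolding total_variation_def
  proof (rule cSup_least[OF vs_nonempty[OF assms(2)]])
    fix s assume "s \<in> variation_sums a t F"
    from cSup_upper[OF vs_ext[OF this assms(3)] bdd]
    show "s \<le> Sup (variation_sums a t' F) - norm (F t' - F t)" by simp
  qed
  then show ?thesis by simp
qed

lemma sigma_exists:
  assumes "has_bounded_variation_on_interval a b H"
  shows "\<exists>\<sigma>. \<forall>t\<in>{a..b}. \<forall>s\<in>{a..b}. norm (H t - H s) \<le> \<bar>\<sigma> t - \<sigma> s\<bar> \<and> \<bar>t - s\<bar> \<le> \<bar>\<sigma> t - \<sigma> s\<bar>"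
proof -
  define \<sigma> where "\<sigma> t = t + total_variation a t H" for t
  have key: "norm (H t - H s) \<le> \<bar>\<sigma> t - \<sigma> s\<bar> \<and> \<bar>t - s\<bar> \<le> \<bar>\<sigma> t - \<sigma> s\<bar>"
    if "t \<in> {a..b}" "s \<in> {a..b}" "s \<le> t" for s t
  proof -
    have "total_variation a s H + norm (H t - H s) \<le> total_variation a t H"
      using tv_super[OF assms, of s t] that by auto
    then show ?thesis unfolding \<sigma>_def using that norm_ge_zero[of "H t - H s"] by (smt (verit))
  qed
  show ?thesis
  proof (intro exI ballI)
    fix t s assume ts: "t \<in> {a..b}" "s \<in> {a..b}"
    show "norm (H t - H s) \<le> \<bar>\<sigma> t - \<sigma> s\<bar> \<and> \<bar>t - s\<bar> \<le> \<bar>\<sigma> t - \<sigma> s\<bar>"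
    proof (cases "s \<le> t")
      case True then show ?thesis using key ts by blast
    next
      case False then show ?thesis using key[of s t] ts
        by (auto simp: norm_minus_commute abs_minus_commute)
    qed
  qed
qed


lemma quot_lip:
  fixes N1 N2 :: "'a::real_normed_vector"
  assumes "\<epsilon> > 0" "\<epsilon> \<le> \<bar>d1\<bar>" "\<epsilon> \<le> \<bar>d2\<bar>" "norm N2 \<le> M" "norm (N1 - N2) \<le> P" "\<bar>d1 - d2\<bar> \<le> Q"
  shows "norm (inverse d1 *\<^sub>R N1 - inverse d2 *\<^sub>R N2) \<le> P/\<epsilon> + M*Q/\<epsilon>^2"
proof -
  have d1: "d1 \<noteq> 0" and d2: "d2 \<noteq> 0" using assms by auto
  have eq: "inverse d1 *\<^sub>R N1 - inverse d2 *\<^sub>R N2 = inverse d1 *\<^sub>R (N1 - N2) + ((d2 - d1)/(d1*d2)) *\<^sub>R N2"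
  proof -
    have "(d2 - d1)/(d1*d2) = inverse d1 - inverse d2" using d1 d2 by (simp add: field_simps)
    then show ?thesis by (simp add: scaleR_diff_left scaleR_diff_right)
  qed
  have 1: "norm (inverse d1 *\<^sub>R (N1 - N2)) \<le> P/\<epsilon>"
  proof -
    have "norm (inverse d1 *\<^sub>R (N1 - N2)) = norm (N1 - N2) / \<bar>d1\<bar>"
      by (simp add: divide_inverse_commute)
    also have "\<dots> \<le> P / \<bar>d1\<bar>" using assms d1 by (simp add: divide_right_mono)
    also have "\<dots> \<le> P / \<epsilon>" using assms
      by (meson divide_left_mono norm_ge_zero order_trans mult_pos_pos order_less_le_trans)
    finally show ?thesis .
  qed
  have 2: "norm (((d2 - d1)/(d1*d2)) *\<^sub>R N2) \<le> M*Q/\<epsilon>^2"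
  proof -
    have "norm (((d2 - d1)/(d1*d2)) *\<^sub>R N2) = \<bar>d1 - d2\<bar> * norm N2 / (\<bar>d1\<bar>*\<bar>d2\<bar>)"
      by (simp add: abs_mult abs_minus_commute)
    also have "\<dots> \<le> Q * M / (\<bar>d1\<bar>*\<bar>d2\<bar>)"
      using assms by (intro divide_right_mono mult_mono) auto
    also have "\<dots> \<le> Q * M / (\<epsilon>*\<epsilon>)"
    proof (rule divide_left_mono)
      show "0 \<le> Q * M" using assms by (meson mult_nonneg_nonneg norm_ge_zero order_trans abs_ge_zero)
      show "\<epsilon> * \<epsilon> \<le> \<bar>d1\<bar> * \<bar>d2\<bar>" using assms by (intro mult_mono) auto
      show "0 < \<bar>d1\<bar> * \<bar>d2\<bar> * (\<epsilon> * \<epsilon>)" using assms d1 d2 by simp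
    qed
    finally show ?thesis by (simp add: power2_eq_square mult.commute)
  qed
  show ?thesis unfolding eq using 1 2 norm_triangle_ineq[of "inverse d1 *\<^sub>R (N1 - N2)" "((d2 - d1)/(d1*d2)) *\<^sub>R N2"]
    by linarith
qed

lemma three_distinct:
  assumes "CARD('n::finite) \<ge> 3"
  obtains i j k :: "'n::finite" where "i \<noteq> j" "i \<noteq> k" "j \<noteq> k"
proof -
  obtain i :: 'n where "i \<in> UNIV" by simp
  have "card (UNIV - {i}) \<ge> 2" using assms by (simp add: card_Diff_singleton)
  then obtain j where j: "j \<in> UNIV - {i}"
    by (metis all_not_in_conv card.empty not_numeral_le_zero)
  have "card (UNIV - {i, j}) \<ge> 1" using assms j by (simp add: card_Diff_subset)
  then obtain k where k: "k \<in> UNIV - {i, j}"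
    by (metis all_not_in_conv card.empty not_one_le_zero)
  show ?thesis using that j k by blast
qed


lemma norm3: fixes a b c :: "'a::real_normed_vector"
  shows "norm (a - b - c) \<le> norm a + norm b + norm c"
  using norm_triangle_ineq4[of a b] norm_triangle_ineq4[of "a - b" c] by linarith

lemma negl_core:
  fixes H :: "real \<Rightarrow> real^'n::finite" and c :: "real \<Rightarrow> real \<Rightarrow> real^'n" and d :: "real \<Rightarrow> real \<Rightarrow> real"
  assumes n3: "CARD('n) \<ge> 3"
    and sH: "\<And>t s. t \<in> I \<Longrightarrow> s \<in> I \<Longrightarrow> norm (H t - H s) \<le> \<bar>\<sigma> t - \<sigma> s\<bar>"
    and sI: "\<And>t s. t \<in> I \<Longrightarrow> s \<in> I \<Longrightarrow> \<bar>t - s\<bar> \<le> \<bar>\<sigma> t - \<sigma> s\<bar>"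
    and HB: "\<And>t. t \<in> I \<Longrightarrow> norm (H t) \<le> B"
    and L0: "L \<ge> 0"
    and cL: "\<And>t t' s s'. t \<in> I \<Longrightarrow> t' \<in> I \<Longrightarrow> s \<in> I \<Longrightarrow> s' \<in> I \<Longrightarrow>
               norm (c t t' - c s s') \<le> L * (\<bar>t - s\<bar> + \<bar>t' - s'\<bar>)"
    and dL: "\<And>t t' s s'. t \<in> I \<Longrightarrow> t' \<in> I \<Longrightarrow> s \<in> I \<Longrightarrow> s' \<in> I \<Longrightarrow>
               \<bar>d t t' - d s s'\<bar> \<le> L * (\<bar>t - s\<bar> + \<bar>t' - s'\<bar>)"
    and cB: "\<And>t t'. t \<in> I \<Longrightarrow> t' \<in> I \<Longrightarrow> norm (c t t') \<le> C"
  shows "negligible {inverse (d t t') *\<^sub>R (H t - H t' - c t t') | t t'. t \<in> I \<and> t' \<in> I \<and> d t t' \<noteq> 0}"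
proof -
  obtain i j k :: 'n where ij: "i \<noteq> j" "i \<noteq> k" "j \<noteq> k" using three_distinct[OF n3] by blast
  have inj: "inj_on \<sigma> I"
    unfolding inj_on_def using sI by force
  define \<tau> where "\<tau> = inv_into I \<sigma>"
  have \<tau>\<sigma>: "\<tau> (\<sigma> t) = t" if "t \<in> I" for t using inj that by (simp add: \<tau>_def)
  have \<tau>I: "\<tau> x \<in> I" if "x \<in> \<sigma> ` I" for x using that by (simp add: \<tau>_def inv_into_into)
  have \<sigma>\<tau>: "\<sigma> (\<tau> x) = x" if "x \<in> \<sigma> ` I" for x using that by (simp add: \<tau>_def f_inv_into_f)
  define N where "N z = H (\<tau> (z$i)) - H (\<tau> (z$j)) - c (\<tau> (z$i)) (\<tau> (z$j))" for z :: "real^'n"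
  define D where "D z = d (\<tau> (z$i)) (\<tau> (z$j))" for z :: "real^'n"
  define g where "g z = inverse (D z) *\<^sub>R N z" for z
  define S where "S n = {z. z$k = 0 \<and> z$i \<in> \<sigma> ` I \<and> z$j \<in> \<sigma> ` I \<and> 1 / real (Suc n) \<le> \<bar>D z\<bar>}" for n
  have sub: "{inverse (d t t') *\<^sub>R (H t - H t' - c t t') | t t'. t \<in> I \<and> t' \<in> I \<and> d t t' \<noteq> 0}
      \<subseteq> (\<Union>n. g ` S n)"
  proof
    fix x assume "x \<in> {inverse (d t t') *\<^sub>R (H t - H t' - c t t') | t t'. t \<in> I \<and> t' \<in> I \<and> d t t' \<noteq> 0}"
    then obtain t t' where x: "x = inverse (d t t') *\<^sub>R (H t - H t' - c t t')" and tt: "t \<in> I" "t' \<in> I" "d t t' \<noteq> 0"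
      by blast
    obtain n where n: "inverse (real (Suc n)) < \<bar>d t t'\<bar>" using tt(3) reals_Archimedean
      by (metis zero_less_abs_iff)
    define z :: "real^'n" where "z = (\<chi> l. if l = i then \<sigma> t else if l = j then \<sigma> t' else 0)"
    have zi: "z$i = \<sigma> t" and zj: "z$j = \<sigma> t'" and zk: "z$k = 0" using ij by (auto simp: z_def)
    have "z \<in> S n" using zi zj zk tt n \<tau>\<sigma> unfolding S_def D_def by (auto simp: divide_inverse)
    moreover have "g z = x" unfolding g_def N_def D_def x zi zj using \<tau>\<sigma> tt by simp
    ultimately show "x \<in> (\<Union>n. g ` S n)" by blast
  qed
  have negS: "negligible (S n)" for n
  proof -
    have "S n \<subseteq> {z. axis k 1 \<bullet> z = 0}" unfolding S_def by (auto simp: cart_eq_inner_axis inner_commute)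
    moreover have "negligible {z :: real^'n. axis k 1 \<bullet> z = 0}"
      by (rule negligible_hyperplane) (simp add: axis_eq_0_iff)
    ultimately show ?thesis using negligible_subset by blast
  qed
  have negg: "negligible (g ` S n)" for n
  proof -
    define \<epsilon> where "\<epsilon> = 1 / real (Suc n)"
    define M where "M = 2 * \<bar>B\<bar> + \<bar>C\<bar>"
    define K where "K = 2 * ((1 + L) / \<epsilon> + M * L / \<epsilon>^2)"
    have \<epsilon>0: "\<epsilon> > 0" by (simp add: \<epsilon>_def)
    have lip: "norm (g y - g x) \<le> K * norm (y - x)" if x: "x \<in> S n" and y: "y \<in> S n" for x y
    proof -
      have xi: "x$i \<in> \<sigma> ` I" and xj: "x$j \<in> \<sigma> ` I" and yi: "y$i \<in> \<sigma> ` I" and yj: "y$j \<in> \<sigma> ` I"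
        and xD: "\<epsilon> \<le> \<bar>D x\<bar>" and yD: "\<epsilon> \<le> \<bar>D y\<bar>"
        using x y by (auto simp: S_def \<epsilon>_def)
      define \<Delta> where "\<Delta> = \<bar>y$i - x$i\<bar> + \<bar>y$j - x$j\<bar>"
      have \<Delta>2: "\<Delta> \<le> 2 * norm (y - x)"
        using component_le_norm_cart[of "y - x" i] component_le_norm_cart[of "y - x" j]
        unfolding \<Delta>_def by simp
      have d1: "\<bar>\<tau> (y$i) - \<tau> (x$i)\<bar> \<le> \<bar>y$i - x$i\<bar>"
        using sI[OF \<tau>I[OF yi] \<tau>I[OF xi]] by (simp add: \<sigma>\<tau> xi yi)
      have d2: "\<bar>\<tau> (y$j) - \<tau> (x$j)\<bar> \<le> \<bar>y$j - x$j\<bar>"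
        using sI[OF \<tau>I[OF yj] \<tau>I[OF xj]] by (simp add: \<sigma>\<tau> xj yj)
      have h1: "norm (H (\<tau> (y$i)) - H (\<tau> (x$i))) \<le> \<bar>y$i - x$i\<bar>"
        using sH[OF \<tau>I[OF yi] \<tau>I[OF xi]] by (simp add: \<sigma>\<tau> xi yi)
      have h2: "norm (H (\<tau> (y$j)) - H (\<tau> (x$j))) \<le> \<bar>y$j - x$j\<bar>"
        using sH[OF \<tau>I[OF yj] \<tau>I[OF xj]] by (simp add: \<sigma>\<tau> xj yj)
      have cc: "norm (c (\<tau> (y$i)) (\<tau> (y$j)) - c (\<tau> (x$i)) (\<tau> (x$j))) \<le> L * \<Delta>"
      proof -
        have "norm (c (\<tau> (y$i)) (\<tau> (y$j)) - c (\<tau> (x$i)) (\<tau> (x$j)))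
              \<le> L * (\<bar>\<tau> (y$i) - \<tau> (x$i)\<bar> + \<bar>\<tau> (y$j) - \<tau> (x$j)\<bar>)"
          using cL \<tau>I xi xj yi yj by blast
        also have "\<dots> \<le> L * \<Delta>" unfolding \<Delta>_def using d1 d2 L0 by (intro mult_left_mono) auto
        finally show ?thesis .
      qed
      have dd: "\<bar>D y - D x\<bar> \<le> L * \<Delta>"
      proof -
        have "\<bar>D y - D x\<bar> \<le> L * (\<bar>\<tau> (y$i) - \<tau> (x$i)\<bar> + \<bar>\<tau> (y$j) - \<tau> (x$j)\<bar>)"
          unfolding D_def using dL \<tau>I xi xj yi yj by blast
        also have "\<dots> \<le> L * \<Delta>" unfolding \<Delta>_def using d1 d2 L0 by (intro mult_left_mono) auto
        finally show ?thesis .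
      qed
      have nn: "norm (N y - N x) \<le> (1 + L) * \<Delta>"
      proof -
        have "N y - N x = (H (\<tau> (y$i)) - H (\<tau> (x$i))) - (H (\<tau> (y$j)) - H (\<tau> (x$j)))
                 - (c (\<tau> (y$i)) (\<tau> (y$j)) - c (\<tau> (x$i)) (\<tau> (x$j)))"
          unfolding N_def by (simp add: algebra_simps)
        then have "norm (N y - N x) \<le> norm (H (\<tau> (y$i)) - H (\<tau> (x$i))) + norm (H (\<tau> (y$j)) - H (\<tau> (x$j)))
                 + norm (c (\<tau> (y$i)) (\<tau> (y$j)) - c (\<tau> (x$i)) (\<tau> (x$j)))"
          by (simp only: norm3 \<open>N y - N x = _\<close>)
        then show ?thesis using h1 h2 cc unfolding \<Delta>_def by (simp add: algebra_simps)
      qed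
      have nb: "norm (N x) \<le> M"
      proof -
        have "norm (N x) \<le> norm (H (\<tau> (x$i))) + norm (H (\<tau> (x$j))) + norm (c (\<tau> (x$i)) (\<tau> (x$j)))"
          unfolding N_def by (rule norm3)
        then show ?thesis unfolding M_def using HB cB \<tau>I xi xj by (smt (verit))
      qed
      have "norm (g y - g x) \<le> ((1 + L) * \<Delta>)/\<epsilon> + M*(L * \<Delta>)/\<epsilon>^2"
        unfolding g_def by (rule quot_lip[OF \<epsilon>0 yD xD nb nn dd])
      also have "\<dots> = \<Delta> * ((1 + L) / \<epsilon> + M * L / \<epsilon>^2)" by (simp add: algebra_simps)
      also have "\<dots> \<le> (2 * norm (y - x)) * ((1 + L) / \<epsilon> + M * L / \<epsilon>^2)"
        by (rule mult_right_mono[OF \<Delta>2]) (use \<epsilon>0 L0 in \<open>simp add: M_def\<close>)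
      also have "\<dots> = K * norm (y - x)" by (simp add: K_def)
      finally show ?thesis .
    qed
    show ?thesis
    proof (rule negligible_locally_Lipschitz_image[OF _ negS])
      fix x assume "x \<in> S n"
      then show "\<exists>T B. open T \<and> x \<in> T \<and> (\<forall>y\<in>S n \<inter> T. norm (g y - g x) \<le> B * norm (y - x))"
        using lip by (intro exI[of _ UNIV] exI[of _ K]) auto
    qed simp
  qed
  show ?thesis
    using negligible_subset[OF negligible_Union_nat[OF negg] sub] .
qed


lemma small_avoid:
  fixes N :: "'a::euclidean_space set"
  assumes "negligible N" "r > 0"
  shows "\<exists>v. norm v < r \<and> v \<notin> N"
proof (rule ccontr)
  assume "\<not> ?thesis"
  then have "ball 0 r \<subseteq> N" by (auto simp: dist_norm)
  then have "negligible (ball (0::'a) r)" using assms negligible_subset by blast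
  moreover have "\<not> negligible (ball (0::'a) r)" using assms by (intro open_not_negligible) auto
  ultimately show False by blast
qed

lemma bv_add:
  assumes "has_bounded_variation_on_interval a b F" "has_bounded_variation_on_interval a b g"
  shows "has_bounded_variation_on_interval a b (\<lambda>t. F t + g t)"
proof -
  obtain B1 where B1: "\<And>s. s \<in> variation_sums a b F \<Longrightarrow> s \<le> B1"
    using assms(1) unfolding has_bounded_variation_on_interval_def bdd_above_def by blast
  obtain B2 where B2: "\<And>s. s \<in> variation_sums a b g \<Longrightarrow> s \<le> B2"
    using assms(2) unfolding has_bounded_variation_on_interval_def bdd_above_def by blast
  show ?thesis unfolding has_bounded_variation_on_interval_def bdd_above_def
  proof (intro exI ballI)
    fix s assume "s \<in> variation_sums a b (\<lambda>t. F t + g t)"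
    then obtain p m where s: "s = (\<Sum>i<m. norm ((F (p (Suc i)) + g (p (Suc i))) - (F (p i) + g (p i))))"
      and p: "p 0 = a" "p m = b" "\<forall>i<m. p i \<le> p (Suc i)"
      unfolding variation_sums_def by blast
    have "s \<le> (\<Sum>i<m. norm (F (p (Suc i)) - F (p i)) + norm (g (p (Suc i)) - g (p i)))"
      unfolding s
    proof (rule sum_mono)
      fix i
      have "(F (p (Suc i)) + g (p (Suc i))) - (F (p i) + g (p i)) = (F (p (Suc i)) - F (p i)) + (g (p (Suc i)) - g (p i))"
        by (simp add: algebra_simps)
      then show "norm ((F (p (Suc i)) + g (p (Suc i))) - (F (p i) + g (p i)))
          \<le> norm (F (p (Suc i)) - F (p i)) + norm (g (p (Suc i)) - g (p i))"
        by (simp only: norm_triangle_ineq)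
    qed
    also have "\<dots> \<le> B1 + B2"
      unfolding sum.distrib using B1[OF vs_memI[OF p]] B2[OF vs_memI[OF p]] by (rule add_mono)
    finally show "s \<le> B1 + B2" .
  qed
qed

lemma interval_part:
  fixes a b :: real
  assumes "a < b" and n3: "CARD('n::finite) \<ge> 3"
    and F: "CBV_interval a b (F :: real \<Rightarrow> real^'n)" and e: "e > 0"
  shows "\<exists>G :: real \<Rightarrow> real^'n. CBV_interval a b G \<and> inj_on G {a..b} \<and>
                      bv_norm_interval a b (\<lambda>t. F t - G t) < e"
proof -
  have cont: "continuous_on {a..b} F" and bv: "has_bounded_variation_on_interval a b F"
    using F by (auto simp: CBV_interval_def)
  obtain \<sigma> where \<sigma>: "\<And>t s. t\<in>{a..b} \<Longrightarrow> s\<in>{a..b} \<Longrightarrow> norm (F t - F s) \<le> \<bar>\<sigma> t - \<sigma> s\<bar> \<and> \<bar>t - s\<bar> \<le> \<bar>\<sigma> t - \<sigma> s\<bar>"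
    using sigma_exists[OF bv] by blast
  obtain B where B: "\<And>t. t \<in> {a..b} \<Longrightarrow> norm (F t) \<le> B"
    using compact_imp_bounded[OF compact_continuous_image[OF cont compact_Icc]]
    unfolding bounded_iff by blast
  define Q where "Q = {inverse ((\<lambda>t t'. t' - t) t t') *\<^sub>R (F t - F t' - (\<lambda>t t'. 0::real^'n) t t') | t t'.
        t \<in> {a..b} \<and> t' \<in> {a..b} \<and> (\<lambda>t t'. t' - t) t t' \<noteq> 0}"
  have negQ: "negligible Q" unfolding Q_def
  proof (rule negl_core[OF n3, where \<sigma>=\<sigma> and B=B and L=1 and C=0])
    show "\<And>t s. t \<in> {a..b} \<Longrightarrow> s \<in> {a..b} \<Longrightarrow> norm (F t - F s) \<le> \<bar>\<sigma> t - \<sigma> s\<bar>" using \<sigma> by blast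
    show "\<And>t s. t \<in> {a..b} \<Longrightarrow> s \<in> {a..b} \<Longrightarrow> \<bar>t - s\<bar> \<le> \<bar>\<sigma> t - \<sigma> s\<bar>" using \<sigma> by blast
  qed (use B in auto)
  define K where "K = \<bar>a\<bar> + \<bar>b\<bar> + (b - a) + 1"
  have K0: "K > 0" unfolding K_def using assms by simp
  obtain v where v: "norm v < e / K" "v \<notin> Q" using small_avoid[OF negQ divide_pos_pos[OF e K0]] by blast
  define G where "G t = F t + t *\<^sub>R v" for t
  have "CBV_interval a b G"
    unfolding CBV_interval_def
  proof
    show "continuous_on {a..b} G" unfolding G_def by (intro continuous_intros cont)
    have "has_bounded_variation_on_interval a b (\<lambda>t. t *\<^sub>R v)"
      by (rule lip_tv(1)[where L="norm v"]) (use assms in \<open>auto simp: scaleR_diff_left[symmetric]\<close>)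
    then show "has_bounded_variation_on_interval a b G"
      unfolding G_def by (rule bv_add[OF bv])
  qed
  moreover have "inj_on G {a..b}"
  proof (rule inj_onI, rule ccontr)
    fix t t' assume tt: "t \<in> {a..b}" "t' \<in> {a..b}" "G t = G t'" "t \<noteq> t'"
    then have "F t - F t' = (t' - t) *\<^sub>R v" unfolding G_def by (simp add: algebra_simps)
    then have "v = inverse (t' - t) *\<^sub>R (F t - F t' - 0)" using tt(4) by simp
    then have "v \<in> Q" unfolding Q_def using tt by auto
    then show False using v by blast
  qed
  moreover have "bv_norm_interval a b (\<lambda>t. F t - G t) < e"
  proof -
    have eq: "(\<lambda>t. F t - G t) = (\<lambda>t. - (t *\<^sub>R v))" unfolding G_def by auto
    have s1: "(SUP t\<in>{a..b}. norm (- (t *\<^sub>R v))) \<le> (\<bar>a\<bar> + \<bar>b\<bar>) * norm v"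
    proof (rule cSUP_least)
      show "{a..b} \<noteq> {}" using assms by simp
      fix t assume "t \<in> {a..b}"
      then have "\<bar>t\<bar> \<le> \<bar>a\<bar> + \<bar>b\<bar>" by auto
      then show "norm (- (t *\<^sub>R v)) \<le> (\<bar>a\<bar> + \<bar>b\<bar>) * norm v" by (simp add: mult_right_mono)
    qed
    have s2: "total_variation a b (\<lambda>t. - (t *\<^sub>R v)) \<le> norm v * (b - a)"
      by (rule lip_tv(2)) (use assms in \<open>auto simp: scaleR_diff_left[symmetric] norm_minus_commute abs_minus_commute mult.commute\<close>)
    have "bv_norm_interval a b (\<lambda>t. F t - G t) \<le> (\<bar>a\<bar> + \<bar>b\<bar>) * norm v + norm v * (b - a)"
      unfolding bv_norm_interval_def eq using s1 s2 by linarith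
    also have "\<dots> \<le> K * norm v" unfolding K_def by (simp add: algebra_simps)
    also have "\<dots> < K * (e / K)" using v(1) K0 by (intro mult_strict_left_mono) auto
    also have "\<dots> = e" using K0 by simp
    finally show ?thesis .
  qed
  ultimately show ?thesis by blast
qed


lemma cos_lip: fixes x y :: real shows "\<bar>cos x - cos y\<bar> \<le> \<bar>x - y\<bar>"
proof -
  have "\<bar>cos x - cos y\<bar> = 2 * \<bar>sin ((x + y) / 2)\<bar> * \<bar>sin ((y - x) / 2)\<bar>"
    by (simp add: cos_diff_cos abs_mult)
  also have "\<dots> \<le> 2 * 1 * \<bar>(y - x) / 2\<bar>"
    by (intro mult_mono abs_sin_x_le_abs_x) auto
  finally show ?thesis by simp
qed

lemma sin_lip: fixes x y :: real shows "\<bar>sin x - sin y\<bar> \<le> \<bar>x - y\<bar>"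
proof -
  have "\<bar>sin x - sin y\<bar> = 2 * \<bar>sin ((x - y) / 2)\<bar> * \<bar>cos ((x + y) / 2)\<bar>"
    by (simp add: sin_diff_sin abs_mult)
  also have "\<dots> \<le> 2 * \<bar>(x - y) / 2\<bar> * 1"
    by (intro mult_mono abs_sin_x_le_abs_x) auto
  finally show ?thesis by simp
qed

lemma Re_cp_lip: "\<bar>Re (circle_param x) - Re (circle_param y)\<bar> \<le> 2 * pi * \<bar>x - y\<bar>"
  using cos_lip[of "2*pi*x" "2*pi*y"]
  by (simp add: circle_param_def right_diff_distrib[symmetric] abs_mult)

lemma Im_cp_lip: "\<bar>Im (circle_param x) - Im (circle_param y)\<bar> \<le> 2 * pi * \<bar>x - y\<bar>"
  using sin_lip[of "2*pi*x" "2*pi*y"]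
  by (simp add: circle_param_def right_diff_distrib[symmetric] abs_mult)

lemma cp_sphere: "circle_param s \<in> sphere 0 1"
  by (simp add: circle_param_def)

lemma cp_surj:
  assumes "z \<in> sphere 0 1"
  shows "\<exists>s\<in>{0..1}. circle_param s = z"
proof -
  have nz: "norm z = 1" using assms by simp
  have A: "0 \<le> Arg2pi z" "Arg2pi z < 2*pi" "is_Arg z (Arg2pi z)" using Arg2pi by auto
  have "z = exp (\<i> * of_real (Arg2pi z))" using A(3) nz by (simp add: is_Arg_def)
  then have "circle_param (Arg2pi z / (2*pi)) = z"
    by (simp add: circle_param_def cis_conv_exp)
  moreover have "Arg2pi z / (2*pi) \<in> {0..1}" using A by auto
  ultimately show ?thesis by blast
qed


lemma aux_cancel: fixes x e :: real shows "x \<noteq> 0 \<Longrightarrow> x * (2 * (e / (2 * x))) = e"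
  by (simp add: field_simps)

lemma lin2_lip:
  fixes v w :: "'a::real_normed_vector"
  shows "norm ((Re (circle_param x) *\<^sub>R v + Im (circle_param x) *\<^sub>R w)
             - (Re (circle_param y) *\<^sub>R v + Im (circle_param y) *\<^sub>R w))
         \<le> (2 * pi * (norm v + norm w)) * \<bar>x - y\<bar>"
proof -
  have eq: "(Re (circle_param x) *\<^sub>R v + Im (circle_param x) *\<^sub>R w)
             - (Re (circle_param y) *\<^sub>R v + Im (circle_param y) *\<^sub>R w)
       = (Re (circle_param x) - Re (circle_param y)) *\<^sub>R v + (Im (circle_param x) - Im (circle_param y)) *\<^sub>R w"
    by (simp add: algebra_simps)
  have "norm ((Re (circle_param x) - Re (circle_param y)) *\<^sub>R v + (Im (circle_param x) - Im (circle_param y)) *\<^sub>R w)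
     \<le> \<bar>Re (circle_param x) - Re (circle_param y)\<bar> * norm v + \<bar>Im (circle_param x) - Im (circle_param y)\<bar> * norm w"
    using norm_triangle_ineq[of "(Re (circle_param x) - Re (circle_param y)) *\<^sub>R v" "(Im (circle_param x) - Im (circle_param y)) *\<^sub>R w"]
    by simp
  also have "\<dots> \<le> (2 * pi * \<bar>x - y\<bar>) * norm v + (2 * pi * \<bar>x - y\<bar>) * norm w"
    by (intro add_mono mult_right_mono Re_cp_lip Im_cp_lip) auto
  also have "\<dots> = (2 * pi * (norm v + norm w)) * \<bar>x - y\<bar>" by (simp add: algebra_simps)
  finally show ?thesis unfolding eq .
qed

lemma circle_part:
  assumes n3: "CARD('n::finite) \<ge> 3"
    and F: "CBV_circle (F :: complex \<Rightarrow> real^'n)" and e: "e > 0"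
  shows "\<exists>G :: complex \<Rightarrow> real^'n. CBV_circle G \<and> inj_on G (sphere 0 1) \<and>
                      bv_norm_circle (\<lambda>z. F z - G z) < e"
proof -
  have cont: "continuous_on (sphere 0 1) F" and bv: "has_bounded_variation_on_interval 0 1 (F \<circ> circle_param)"
    using F by (auto simp: CBV_circle_def)
  define H where "H = F \<circ> circle_param"
  obtain \<sigma> where \<sigma>: "\<And>t s. t\<in>{0..1} \<Longrightarrow> s\<in>{0..1} \<Longrightarrow> norm (H t - H s) \<le> \<bar>\<sigma> t - \<sigma> s\<bar> \<and> \<bar>t - s\<bar> \<le> \<bar>\<sigma> t - \<sigma> s\<bar>"
    using sigma_exists[OF bv] unfolding H_def by blast
  obtain B where B0: "\<And>z. z \<in> sphere 0 1 \<Longrightarrow> norm (F z) \<le> B"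
    using compact_imp_bounded[OF compact_continuous_image[OF cont compact_sphere]]
    unfolding bounded_iff by blast
  have B: "norm (H t) \<le> B" for t unfolding H_def using B0 cp_sphere by simp
  define r where "r = e / (2 * (1 + 2 * pi))"
  have r0: "r > 0" unfolding r_def using e pi_gt_zero by (simp add: add_pos_pos)
  define dI where "dI t t' = Im (circle_param t') - Im (circle_param t)" for t t'
  define dR where "dR t t' = Re (circle_param t') - Re (circle_param t)" for t t'
  have dIL: "\<bar>dI t t' - dI s s'\<bar> \<le> 2 * pi * (\<bar>t - s\<bar> + \<bar>t' - s'\<bar>)" for t t' s s'
    using Im_cp_lip[of t s] Im_cp_lip[of t' s'] unfolding dI_def by (simp add: algebra_simps; linarith)
  have dRL: "\<bar>dR t t' - dR s s'\<bar> \<le> 2 * pi * (\<bar>t - s\<bar> + \<bar>t' - s'\<bar>)" for t t' s s'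
    using Re_cp_lip[of t s] Re_cp_lip[of t' s'] unfolding dR_def by (simp add: algebra_simps; linarith)
  define W where "W = {inverse (dI t t') *\<^sub>R (H t - H t' - (\<lambda>t t'. 0::real^'n) t t') | t t'.
        t \<in> {0..1} \<and> t' \<in> {0..1} \<and> dI t t' \<noteq> 0}"
  have negW: "negligible W" unfolding W_def
  proof (rule negl_core[OF n3, where \<sigma>=\<sigma> and B=B and L="2*pi" and C=0])
    show "\<And>t s. t \<in> {0..1} \<Longrightarrow> s \<in> {0..1} \<Longrightarrow> norm (H t - H s) \<le> \<bar>\<sigma> t - \<sigma> s\<bar>" using \<sigma> by blast
    show "\<And>t s. t \<in> {0..1} \<Longrightarrow> s \<in> {0..1} \<Longrightarrow> \<bar>t - s\<bar> \<le> \<bar>\<sigma> t - \<sigma> s\<bar>" using \<sigma> by blast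
  qed (use B dIL in auto)
  obtain w where w: "norm w < r" "w \<notin> W" using small_avoid[OF negW r0] by blast
  define cw where "cw t t' = dI t t' *\<^sub>R w" for t t'
  define L where "L = 2 * pi * (1 + norm w)"
  define V where "V = {inverse (dR t t') *\<^sub>R (H t - H t' - cw t t') | t t'.
        t \<in> {0..1} \<and> t' \<in> {0..1} \<and> dR t t' \<noteq> 0}"
  have negV: "negligible V" unfolding V_def
  proof (rule negl_core[OF n3, where \<sigma>=\<sigma> and B=B and L=L and C="2 * norm w"])
    show "\<And>t s. t \<in> {0..1} \<Longrightarrow> s \<in> {0..1} \<Longrightarrow> norm (H t - H s) \<le> \<bar>\<sigma> t - \<sigma> s\<bar>" using \<sigma> by blast
    show "\<And>t s. t \<in> {0..1} \<Longrightarrow> s \<in> {0..1} \<Longrightarrow> \<bar>t - s\<bar> \<le> \<bar>\<sigma> t - \<sigma> s\<bar>" using \<sigma> by blast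
    show "0 \<le> L" unfolding L_def by simp
    fix t t' s s' :: real
    have "2 * pi * (\<bar>t - s\<bar> + \<bar>t' - s'\<bar>) \<le> L * (\<bar>t - s\<bar> + \<bar>t' - s'\<bar>)"
      unfolding L_def by (intro mult_right_mono) auto
    then show "\<bar>dR t t' - dR s s'\<bar> \<le> L * (\<bar>t - s\<bar> + \<bar>t' - s'\<bar>)" using dRL[of t t' s s'] by linarith
    have "norm (cw t t' - cw s s') = \<bar>dI t t' - dI s s'\<bar> * norm w"
      unfolding cw_def by (simp add: scaleR_diff_left[symmetric])
    also have "\<dots> \<le> (2 * pi * (\<bar>t - s\<bar> + \<bar>t' - s'\<bar>)) * norm w" by (intro mult_right_mono dIL) auto
    also have "\<dots> \<le> L * (\<bar>t - s\<bar> + \<bar>t' - s'\<bar>)" unfolding L_def by (simp add: algebra_simps)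
    finally show "norm (cw t t' - cw s s') \<le> L * (\<bar>t - s\<bar> + \<bar>t' - s'\<bar>)" .
    have "\<bar>dI t t'\<bar> \<le> 2" unfolding dI_def
      using abs_Im_le_cmod[of "circle_param t"] abs_Im_le_cmod[of "circle_param t'"] cp_sphere[of t] cp_sphere[of t']
      by (simp; linarith)
    then show "norm (cw t t') \<le> 2 * norm w" unfolding cw_def by (simp add: mult_right_mono)
  qed (use B in auto)
  obtain v where v: "norm v < r" "v \<notin> V" using small_avoid[OF negV r0] by blast
  define G where "G z = F z + (Re z *\<^sub>R v + Im z *\<^sub>R w)" for z
  have "CBV_circle G"
    unfolding CBV_circle_def
  proof
    show "continuous_on (sphere 0 1) G" unfolding G_def by (intro continuous_intros cont)
    have "has_bounded_variation_on_interval 0 1 (\<lambda>t. Re (circle_param t) *\<^sub>R v + Im (circle_param t) *\<^sub>R w)"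
      by (rule lip_tv(1)[OF lin2_lip]) simp
    from bv_add[OF bv this] show "has_bounded_variation_on_interval 0 1 (G \<circ> circle_param)"
      by (simp add: G_def o_def)
  qed
  moreover have "inj_on G (sphere 0 1)"
  proof (rule inj_onI, rule ccontr)
    fix z z' assume zz: "z \<in> sphere 0 1" "z' \<in> sphere 0 1" "G z = G z'" "z \<noteq> z'"
    obtain s where s: "s \<in> {0..1}" "circle_param s = z" using cp_surj[OF zz(1)] by blast
    obtain s' where s': "s' \<in> {0..1}" "circle_param s' = z'" using cp_surj[OF zz(2)] by blast
    have Hs: "H s = F z" "H s' = F z'" using s s' by (auto simp: H_def)
    have eq: "F z - F z' = (Re z' - Re z) *\<^sub>R v + (Im z' - Im z) *\<^sub>R w"
      using zz(3) unfolding G_def by (simp add: algebra_simps)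
    show False
    proof (cases "Re z' = Re z")
      case True
      then have ne: "Im z' \<noteq> Im z" using zz(4) complex_eqI by metis
      have "F z - F z' = (Im z' - Im z) *\<^sub>R w" using eq True by simp
      then have "w = inverse (dI s s') *\<^sub>R (H s - H s' - 0)"
        using ne by (simp add: dI_def s s' Hs)
      moreover have "dI s s' \<noteq> 0" using ne by (simp add: dI_def s s')
      ultimately have "w \<in> W" unfolding W_def using s s' by blast
      then show False using w by blast
    next
      case False
      have "F z - F z' - cw s s' = (Re z' - Re z) *\<^sub>R v" using eq by (simp add: cw_def dI_def s s')
      then have "v = inverse (dR s s') *\<^sub>R (H s - H s' - cw s s')"
        using False by (simp add: dR_def s s' Hs)
      moreover have "dR s s' \<noteq> 0" using False by (simp add: dR_def s s')
      ultimately have "v \<in> V" unfolding V_def using s s' by blast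
      then show False using v by blast
    qed
  qed
  moreover have "bv_norm_circle (\<lambda>z. F z - G z) < e"
  proof -
    have eq: "(\<lambda>z. F z - G z) = (\<lambda>z. - (Re z *\<^sub>R v + Im z *\<^sub>R w))" unfolding G_def by auto
    have s1: "(SUP z\<in>sphere 0 1. norm (- (Re z *\<^sub>R v + Im z *\<^sub>R w))) \<le> norm v + norm w"
    proof (rule cSUP_least)
      show "sphere (0::complex) 1 \<noteq> {}" by simp
      fix z :: complex assume z: "z \<in> sphere 0 1"
      have "norm (- (Re z *\<^sub>R v + Im z *\<^sub>R w)) = norm (Re z *\<^sub>R v + Im z *\<^sub>R w)"
        by (rule norm_minus_cancel)
      also have "\<dots> \<le> \<bar>Re z\<bar> * norm v + \<bar>Im z\<bar> * norm w"
        using norm_triangle_ineq[of "Re z *\<^sub>R v" "Im z *\<^sub>R w"] by simp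
      also have "\<dots> \<le> 1 * norm v + 1 * norm w"
        using abs_Re_le_cmod[of z] abs_Im_le_cmod[of z] z by (intro add_mono mult_right_mono) auto
      finally show "norm (- (Re z *\<^sub>R v + Im z *\<^sub>R w)) \<le> norm v + norm w" by simp
    qed
    have s2: "total_variation 0 1 ((\<lambda>z. - (Re z *\<^sub>R v + Im z *\<^sub>R w)) \<circ> circle_param) \<le> (2 * pi * (norm v + norm w)) * (1 - 0)"
    proof (rule lip_tv(2))
      fix x y
      show "norm (((\<lambda>z. - (Re z *\<^sub>R v + Im z *\<^sub>R w)) \<circ> circle_param) x - ((\<lambda>z. - (Re z *\<^sub>R v + Im z *\<^sub>R w)) \<circ> circle_param) y)
          \<le> 2 * pi * (norm v + norm w) * \<bar>x - y\<bar>"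
      proof -
        have e1: "((\<lambda>z. - (Re z *\<^sub>R v + Im z *\<^sub>R w)) \<circ> circle_param) x - ((\<lambda>z. - (Re z *\<^sub>R v + Im z *\<^sub>R w)) \<circ> circle_param) y
          = - ((Re (circle_param x) *\<^sub>R v + Im (circle_param x) *\<^sub>R w)
             - (Re (circle_param y) *\<^sub>R v + Im (circle_param y) *\<^sub>R w))"
          by (simp add: o_def algebra_simps)
        show ?thesis unfolding e1 norm_minus_cancel by (rule lin2_lip)
      qed
    qed simp
    have "bv_norm_circle (\<lambda>z. F z - G z) \<le> (1 + 2 * pi) * (norm v + norm w)"
      unfolding bv_norm_circle_def eq using s1 s2 by (simp add: algebra_simps)
    also have "\<dots> < (1 + 2 * pi) * (r + r)"
      using v w pi_gt_zero by (intro mult_strict_left_mono add_strict_mono) (auto intro: add_pos_pos)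
    also have "\<dots> = e"
    proof -
      have p: "1 + 2 * pi \<noteq> 0" using pi_gt_zero by linarith
      have "(1 + 2 * pi) * (r + r) = (1 + 2 * pi) * (2 * (e / (2 * (1 + 2 * pi))))" unfolding r_def by simp
      also have "\<dots> = e" using p by (rule aux_cancel)
      finally show ?thesis .
    qed
    finally show ?thesis .
  qed
  ultimately show ?thesis by blast
qed

theorem theorem3p5:
  fixes a b :: real
  assumes "a < b" and "CARD('n::finite) \<ge> 3"
  shows "(\<forall>F :: real \<Rightarrow> real^'n. CBV_interval a b F \<longrightarrow>
            (\<forall>e>0. \<exists>G :: real \<Rightarrow> real^'n. CBV_interval a b G \<and> inj_on G {a..b} \<and>
                      bv_norm_interval a b (\<lambda>t. F t - G t) < e))
       \<and> (\<forall>F :: complex \<Rightarrow> real^'n. CBV_circle F \<longrightarrow>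
            (\<forall>e>0. \<exists>G :: complex \<Rightarrow> real^'n. CBV_circle G \<and> inj_on G (sphere 0 1) \<and>
                      bv_norm_circle (\<lambda>z. F z - G z) < e))"
  using interval_part[OF assms] circle_part[OF assms(2)] by blast

end
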